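(* Let $\mathbb{F}$ be a distribution, $n\in\mathbb{N}$, and $\hat\rho_n$ a risk estimator such that $\hat\rho_n(\boldsymbol{X})$ is bounded and non-negative and $\rho_{\mathbb{F}}(S(c))$ is finite for all $c\ge0$. Then the function $c\mapsto\rho_{\mathbb{F}}(S(c))$ is non-increasing and continuous on $[0,\infty)$, with $|\rho_{\mathbb{F}}(S(c))-\rho_{\mathbb{F}}(S(c'))|\le |c-c'|\,\|\hat\rho_n(\boldsymbol{X})\|_{\sup}$. Consequently, if $c^*_{\mathbb{F}}\in(0,\infty)$, then the optimally scaled estimator $c^*_{\mathbb{F}}\hat\rho_n$ is risk unbiased under $\mathbb{F}$, i.e. $$\rho_{\mathbb{F}}\big(X+c^*_{\mathbb{F}}\,\hat\rho_n(\boldsymbol{X})\big)=0.$$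
   Context: Setting: on a probability space, $X$ is a real random variable and $\boldsymbol{X}=(X_1,\dots,X_n)$ a sample independent of $X$, with $X,X_1,\dots,X_n$ i.i.d. with distribution $\mathbb{F}$. $\rho$ is a monetary risk measure (monotone: $X\le Y\Rightarrow\rho(X)\ge\rho(Y)$; cash invariant: $\rho(X+m)=\rho(X)-m$), positively homogeneous and law-invariant; $\rho_{\mathbb{F}}$ denotes $\rho$ evaluated under the law induced by $\mathbb{F}$. A risk estimator is a measurable $\hat\rho_n\colon\mathbb{R}^n\to\mathbb{R}$ that is cash invariant ($\hat\rho_n(\boldsymbol{x}+m)=\hat\rho_n(\boldsymbol{x})-m$) and positively homogeneous ($\hat\rho_n(\lambda\boldsymbol{x})=\lambda\hat\rho_n(\boldsymbol{x})$, $\lambda\ge0$). $S(c):=X+c\,\hat\rho_n(\boldsymbol{X})$ and $c^*_{\mathbb{F}}:=\inf\{c>0:\rho_{\mathbb{F}}(S(c))\le0\}$ with $\inf\emptyset=\infty$. $\|\cdot\|_{\sup}$ is the essential supremum norm. *)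

theory Defs
  imports "HOL-Probability.Probability"
begin

definition risk_measure :: "'w measure \<Rightarrow> (('w \<Rightarrow> real) \<Rightarrow> ereal) \<Rightarrow> bool" where
  "risk_measure M \<rho> \<longleftrightarrow>
     (\<forall>Y Z. Y \<in> borel_measurable M \<longrightarrow> Z \<in> borel_measurable M \<longrightarrow>
        (AE \<omega> in M. Y \<omega> \<le> Z \<omega>) \<longrightarrow> \<rho> Z \<le> \<rho> Y) \<and>
     (\<forall>Y m. Y \<in> borel_measurable M \<longrightarrow> \<rho> (\<lambda>\<omega>. Y \<omega> + m) = \<rho> Y - ereal m) \<and>
     (\<forall>Y (l::real). Y \<in> borel_measurable M \<longrightarrow> l \<ge> 0 \<longrightarrow>
        \<rho> (\<lambda>\<omega>. l * Y \<omega>) = ereal l * \<rho> Y) \<and>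
     (\<forall>Y Z. Y \<in> borel_measurable M \<longrightarrow> Z \<in> borel_measurable M \<longrightarrow>
        distr M borel Y = distr M borel Z \<longrightarrow> \<rho> Y = \<rho> Z)"

text \<open>Risk estimator on R^n, where points of R^n are represented as elements
of the product space PiM {..<n} (\<lambda>_. borel) (extensional functions on {..<n}).\<close>
definition risk_estimator :: "nat \<Rightarrow> ((nat \<Rightarrow> real) \<Rightarrow> real) \<Rightarrow> bool" where
  "risk_estimator n R \<longleftrightarrow>
     R \<in> borel_measurable (PiM {..<n} (\<lambda>_. borel)) \<and>
     (\<forall>x \<in> space (PiM {..<n} (\<lambda>_. (borel :: real measure))). \<forall>m::real.
        R (\<lambda>i\<in>{..<n}. x i + m) = R x - m) \<and>
     (\<forall>x \<in> space (PiM {..<n} (\<lambda>_. (borel :: real measure))). \<forall>l::real. l \<ge> 0 \<longrightarrow>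
        R (\<lambda>i\<in>{..<n}. l * x i) = l * R x)"

text \<open>The sample vector (X_1,...,X_n) at \<omega> (indices 0..n-1).\<close>
definition sample :: "nat \<Rightarrow> (nat \<Rightarrow> 'w \<Rightarrow> real) \<Rightarrow> 'w \<Rightarrow> nat \<Rightarrow> real" where
  "sample n Xs \<omega> = (\<lambda>i\<in>{..<n}. Xs i \<omega>)"

definition S :: "('w \<Rightarrow> real) \<Rightarrow> ((nat \<Rightarrow> real) \<Rightarrow> real) \<Rightarrow> nat \<Rightarrow> (nat \<Rightarrow> 'w \<Rightarrow> real)
    \<Rightarrow> real \<Rightarrow> 'w \<Rightarrow> real" where
  "S X R n Xs c = (\<lambda>\<omega>. X \<omega> + c * R (sample n Xs \<omega>))"

text \<open>c* = inf {c > 0. \<rho>(S(c)) \<le> 0}, with inf of the empty set = \<infinity>.\<close>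
definition cstar :: "(('w \<Rightarrow> real) \<Rightarrow> ereal) \<Rightarrow> (real \<Rightarrow> 'w \<Rightarrow> real) \<Rightarrow> ereal" where
  "cstar \<rho> SS = Inf (ereal ` {c. 0 < c \<and> \<rho> (SS c) \<le> 0})"

end

theory Submission imports Defs begin

lemma abs_lip:
  fixes g :: "real \<Rightarrow> real" and K :: real
  assumes K: "0 \<le> K"
    and lip: "\<And>c c'. 0 \<le> c \<Longrightarrow> c \<le> c' \<Longrightarrow> g c - (c'-c)*K \<le> g c'"
    and mono: "\<And>c c'. 0 \<le> c \<Longrightarrow> c \<le> c' \<Longrightarrow> g c' \<le> g c"
  shows "0 \<le> c \<Longrightarrow> 0 \<le> c' \<Longrightarrow> \<bar>g c - g c'\<bar> \<le> \<bar>c - c'\<bar> * K"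
proof -
  assume a: "0 \<le> c" "0 \<le> c'"
  show ?thesis
  proof (cases "c \<le> c'")
    case True thus ?thesis using lip[of c c'] mono[of c c'] a by auto
  next
    case False thus ?thesis using lip[of c' c] mono[of c' c] a by auto
  qed
qed

lemma abs_cont:
  fixes g :: "real \<Rightarrow> real" and K :: real
  assumes K: "0 \<le> K"
    and L: "\<And>c c'. 0 \<le> c \<Longrightarrow> 0 \<le> c' \<Longrightarrow> \<bar>g c - g c'\<bar> \<le> \<bar>c - c'\<bar> * K"
  shows "continuous_on {0..} g"
proof (rule continuous_onI)
  fix x e :: real assume x: "x \<in> {0..}" and e: "0 < e"
  show "\<exists>d>0. \<forall>x'\<in>{0..}. dist x' x < d \<longrightarrow> dist (g x') (g x) \<le> e"
  proof (intro exI[of _ "e/(K+1)"] conjI ballI impI)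
    show "0 < e/(K+1)" using e K by auto
    fix y assume y: "y \<in> {0..}" and d: "dist y x < e/(K+1)"
    have "dist (g y) (g x) \<le> \<bar>y - x\<bar> * K" using L[of y x] x y by (auto simp: dist_real_def)
    also have "\<dots> \<le> e/(K+1) * K" using d K by (intro mult_right_mono) (auto simp: dist_real_def)
    also have "\<dots> \<le> e" using e K by (simp add: field_simps)
    finally show "dist (g y) (g x) \<le> e" .
  qed
qed

lemma abs_cstar:
  fixes g :: "real \<Rightarrow> real" and K :: real
  assumes K: "0 \<le> K"
    and lip: "\<And>c c'. 0 \<le> c \<Longrightarrow> c \<le> c' \<Longrightarrow> g c - (c'-c)*K \<le> g c'"
    and pos: "0 < Inf (ereal ` {c. 0 < c \<and> g c \<le> 0})"
    and fin: "Inf (ereal ` {c. 0 < c \<and> g c \<le> 0}) < \<infinity>"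
  shows "g (real_of_ereal (Inf (ereal ` {c. 0 < c \<and> g c \<le> 0}))) = 0"
proof -
  define A where "A = {c. 0 < c \<and> g c \<le> 0}"
  have ne: "A \<noteq> {}"
  proof
    assume "A = {}" hence "{c. 0 < c \<and> g c \<le> 0} = {}" unfolding A_def .
    thus False using fin by (simp only: image_empty Inf_empty top_ereal_def)
  qed
  have bdd: "bdd_below A" unfolding A_def by (rule bdd_belowI[of _ 0]) auto
  have eq: "Inf (ereal ` A) = ereal (Inf A)" using ereal_Inf'[OF bdd ne] by simp
  define c0 where "c0 = Inf A"
  have c0: "0 < c0" using pos eq unfolding c0_def A_def by simp
  have r: "real_of_ereal (Inf (ereal ` {c. 0 < c \<and> g c \<le> 0})) = c0"
    using eq unfolding A_def c0_def by simp
  have le: "g c0 \<le> 0"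
  proof (rule ccontr)
    assume "\<not> g c0 \<le> 0"
    hence gp: "g c0 > 0" by simp
    define e where "e = g c0 / (2*(K+1))"
    have e: "e > 0" using gp K unfolding e_def by auto
    obtain a where a: "a \<in> A" "a < c0 + e" using cInf_lessD[OF ne, of "c0+e"] e unfolding c0_def by auto
    have "c0 \<le> a" using cInf_lower[OF a(1) bdd] unfolding c0_def .
    have "g c0 - (a - c0)*K \<le> g a" using lip[of c0 a] c0 `c0 \<le> a` by auto
    moreover have "g a \<le> 0" using a unfolding A_def by auto
    moreover have "(a-c0)*K \<le> e*K" using a `c0 \<le> a` K by (intro mult_right_mono) auto
    moreover have "e*K < g c0" using gp K unfolding e_def by (simp add: field_simps add_nonneg_pos)
    ultimately show False by linarith
  qed
  have ge: "g c0 \<ge> 0"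
  proof (rule ccontr)
    assume "\<not> g c0 \<ge> 0"
    hence gn: "g c0 < 0" by simp
    define d where "d = min (c0/2) (- g c0 / (2*(K+1)))"
    have "- g c0 / (2*(K+1)) > 0" using gn K by (intro divide_pos_pos) auto
    hence d: "d > 0" "d < c0" using gn K c0 unfolding d_def by auto
    define c where "c = c0 - d"
    have "c \<notin> A"
    proof
      assume "c \<in> A" then have "c0 \<le> c" using cInf_lower[OF _ bdd] unfolding c0_def by auto
      thus False using d unfolding c_def by auto
    qed
    hence gc: "g c > 0" using d unfolding A_def c_def by auto
    have "g c - (c0 - c)*K \<le> g c0" using lip[of c c0] d unfolding c_def by auto
    moreover have "(c0-c)*K \<le> (- g c0 / (2*(K+1)))*K" unfolding c_def d_def using K by (intro mult_right_mono) auto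
    moreover have "(- g c0 / (2*(K+1)))*K < - g c0" using gn K by (simp add: field_simps) (smt (verit) mult_nonneg_nonpos)
    ultimately show False using gc by linarith
  qed
  show ?thesis using le ge r by simp
qed


theorem mainTheorem2:
  fixes M :: "'w measure" and F :: "real measure" and n :: nat
    and X :: "'w \<Rightarrow> real" and Xs :: "nat \<Rightarrow> 'w \<Rightarrow> real"
    and \<rho> :: "('w \<Rightarrow> real) \<Rightarrow> ereal" and R :: "(nat \<Rightarrow> real) \<Rightarrow> real"
  assumes "prob_space M"
    and "X \<in> borel_measurable M" and "\<And>i. i < n \<Longrightarrow> Xs i \<in> borel_measurable M"
    and "distr M borel X = F" and "\<And>i. i < n \<Longrightarrow> distr M borel (Xs i) = F"
    and "prob_space.indep_vars M (\<lambda>_. borel)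
           (\<lambda>j. case j of None \<Rightarrow> X | Some i \<Rightarrow> Xs i) (insert None (Some ` {..<n}))"
    and "risk_measure M \<rho>"
    and "risk_estimator n R"
    and "\<exists>B. AE \<omega> in M. \<bar>R (sample n Xs \<omega>)\<bar> \<le> B"
    and "AE \<omega> in M. 0 \<le> R (sample n Xs \<omega>)"
    and "\<And>c. c \<ge> 0 \<Longrightarrow> \<bar>\<rho> (S X R n Xs c)\<bar> \<noteq> \<infinity>"
  shows "(\<forall>c c'. 0 \<le> c \<and> c \<le> c' \<longrightarrow> \<rho> (S X R n Xs c') \<le> \<rho> (S X R n Xs c))
       \<and> continuous_on {0..} (\<lambda>c. \<rho> (S X R n Xs c))
       \<and> (\<forall>c c'. 0 \<le> c \<and> 0 \<le> c' \<longrightarrow>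
            \<bar>\<rho> (S X R n Xs c) - \<rho> (S X R n Xs c')\<bar>
              \<le> ereal \<bar>c - c'\<bar> * esssup M (\<lambda>\<omega>. ereal \<bar>R (sample n Xs \<omega>)\<bar>))
       \<and> (0 < cstar \<rho> (S X R n Xs) \<and> cstar \<rho> (S X R n Xs) < \<infinity> \<longrightarrow>
            \<rho> (S X R n Xs (real_of_ereal (cstar \<rho> (S X R n Xs)))) = 0)"
proof -
  interpret prob_space M by fact
  define r where "r = (\<lambda>\<omega>. R (sample n Xs \<omega>))"
  have smeas: "sample n Xs \<in> M \<rightarrow>\<^sub>M PiM {..<n} (\<lambda>_. borel)"
    unfolding sample_def by (rule measurable_restrict) (use assms(3) in auto)
  have Rm: "R \<in> borel_measurable (PiM {..<n} (\<lambda>_. borel))"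
    using assms(8) unfolding risk_estimator_def by blast
  have rm: "r \<in> borel_measurable M" unfolding r_def
    using measurable_comp[OF smeas Rm] by (simp add: o_def)
  have Sm: "S X R n Xs c \<in> borel_measurable M" for c
    unfolding S_def using rm assms(2) unfolding r_def by measurable
  have erm: "(\<lambda>\<omega>. ereal \<bar>r \<omega>\<bar>) \<in> borel_measurable M" using rm by measurable
  obtain B where B: "AE \<omega> in M. \<bar>r \<omega>\<bar> \<le> B" using assms(9) unfolding r_def by blast
  define E where "E = esssup M (\<lambda>\<omega>. ereal \<bar>r \<omega>\<bar>)"
  have EB: "E \<le> ereal B" unfolding E_def by (rule esssup_I[OF erm]) (use B in auto)
  have EA: "AE \<omega> in M. ereal \<bar>r \<omega>\<bar> \<le> E" unfolding E_def by (rule esssup_AE)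
  have E0: "E \<ge> 0"
  proof (rule ccontr)
    assume "\<not> E \<ge> 0"
    hence "E < 0" by simp
    have "AE \<omega> in M. False" using EA
    proof (rule AE_mp, intro AE_I2 impI)
      fix \<omega> assume "ereal \<bar>r \<omega>\<bar> \<le> E"
      moreover have "0 \<le> ereal \<bar>r \<omega>\<bar>" by simp
      ultimately show False using `E < 0` by (meson not_le order_trans)
    qed
    thus False using AE_False by simp
  qed
  obtain K where K: "E = ereal K" "0 \<le> K" using E0 EB by (cases E) auto
  have AK: "AE \<omega> in M. \<bar>r \<omega>\<bar> \<le> K" using EA K(1) by simp
  have r0: "AE \<omega> in M. 0 \<le> r \<omega>" using assms(10) unfolding r_def .
  have mono_rho: "\<And>Y Z. Y \<in> borel_measurable M \<Longrightarrow> Z \<in> borel_measurable M \<Longrightarrow>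
        (AE \<omega> in M. Y \<omega> \<le> Z \<omega>) \<Longrightarrow> \<rho> Z \<le> \<rho> Y"
    and cash: "\<And>Y m. Y \<in> borel_measurable M \<Longrightarrow> \<rho> (\<lambda>\<omega>. Y \<omega> + m) = \<rho> Y - ereal m"
    using assms(7) unfolding risk_measure_def by blast+
  define g where "g c = real_of_ereal (\<rho> (S X R n Xs c))" for c
  have fin: "\<rho> (S X R n Xs c) = ereal (g c)" if "0 \<le> c" for c
    using assms(11)[OF that] unfolding g_def by (cases "\<rho> (S X R n Xs c)") auto
  have monoE: "\<rho> (S X R n Xs c') \<le> \<rho> (S X R n Xs c)" if "0 \<le> c" "c \<le> c'" for c c'
  proof (rule mono_rho[OF Sm Sm])
    show "AE \<omega> in M. S X R n Xs c \<omega> \<le> S X R n Xs c' \<omega>"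
      using r0 proof eventually_elim
      case (elim \<omega>) thus ?case unfolding S_def r_def using that
        by (simp add: mult_right_mono)
    qed
  qed
  have mono: "g c' \<le> g c" if "0 \<le> c" "c \<le> c'" for c c'
    using monoE[OF that] fin[of c] fin[of c'] that by simp
  have lip: "g c - (c'-c)*K \<le> g c'" if "0 \<le> c" "c \<le> c'" for c c'
  proof -
    have "\<rho> (\<lambda>\<omega>. S X R n Xs c \<omega> + (c'-c)*K) \<le> \<rho> (S X R n Xs c')"
    proof (rule mono_rho[OF Sm])
      show "(\<lambda>\<omega>. S X R n Xs c \<omega> + (c'-c)*K) \<in> borel_measurable M" using Sm by measurable
      show "AE \<omega> in M. S X R n Xs c' \<omega> \<le> S X R n Xs c \<omega> + (c'-c)*K"
        using AK proof eventually_elim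
        case (elim \<omega>)
        have "(c'-c) * r \<omega> \<le> (c'-c)*K" using elim that by (intro mult_left_mono) auto
        thus ?case unfolding S_def r_def by (simp add: algebra_simps)
      qed
    qed
    thus ?thesis using cash[OF Sm] fin[of c] fin[of c'] that by simp
  qed
  have L: "\<bar>g c - g c'\<bar> \<le> \<bar>c - c'\<bar> * K" if "0 \<le> c" "0 \<le> c'" for c c'
    using abs_lip[OF K(2) lip mono that] by blast
  have P1: "\<forall>c c'. 0 \<le> c \<and> c \<le> c' \<longrightarrow> \<rho> (S X R n Xs c') \<le> \<rho> (S X R n Xs c)"
    using monoE by blast
  have P2: "continuous_on {0..} (\<lambda>c. \<rho> (S X R n Xs c))"
  proof -
    have "continuous_on {0..} (\<lambda>c. ereal (g c))"
      by (rule continuous_on_ereal[OF abs_cont[OF K(2) L]]) 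
    thus ?thesis by (rule continuous_on_cong[THEN iffD1, rotated 2]) (auto simp: fin)
  qed
  have P3: "\<forall>c c'. 0 \<le> c \<and> 0 \<le> c' \<longrightarrow>
            \<bar>\<rho> (S X R n Xs c) - \<rho> (S X R n Xs c')\<bar>
              \<le> ereal \<bar>c - c'\<bar> * esssup M (\<lambda>\<omega>. ereal \<bar>R (sample n Xs \<omega>)\<bar>)"
  proof (intro allI impI)
    fix c c' :: real assume "0 \<le> c \<and> 0 \<le> c'"
    thus "\<bar>\<rho> (S X R n Xs c) - \<rho> (S X R n Xs c')\<bar>
              \<le> ereal \<bar>c - c'\<bar> * esssup M (\<lambda>\<omega>. ereal \<bar>R (sample n Xs \<omega>)\<bar>)"
      using L[of c c'] fin[of c] fin[of c'] K(1) unfolding E_def r_def by simp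
  qed
  have setq: "{c. 0 < c \<and> \<rho> (S X R n Xs c) \<le> 0} = {c. 0 < c \<and> g c \<le> 0}"
    using fin by auto
  have P4: "0 < cstar \<rho> (S X R n Xs) \<and> cstar \<rho> (S X R n Xs) < \<infinity> \<longrightarrow>
            \<rho> (S X R n Xs (real_of_ereal (cstar \<rho> (S X R n Xs)))) = 0"
  proof
    assume h: "0 < cstar \<rho> (S X R n Xs) \<and> cstar \<rho> (S X R n Xs) < \<infinity>"
    have cs: "cstar \<rho> (S X R n Xs) = Inf (ereal ` {c. 0 < c \<and> g c \<le> 0})"
      unfolding cstar_def setq ..
    have "g (real_of_ereal (cstar \<rho> (S X R n Xs))) = 0"
      unfolding cs by (rule abs_cstar[OF K(2) lip]) (use h cs in auto)
    moreover have "0 \<le> real_of_ereal (cstar \<rho> (S X R n Xs))"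
      using h by (intro real_of_ereal_pos) (simp add: order_less_imp_le)
    ultimately show "\<rho> (S X R n Xs (real_of_ereal (cstar \<rho> (S X R n Xs)))) = 0"
      using fin by simp
  qed
  show ?thesis using P1 P2 P3 P4 by blast
qed

end
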